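(* Let $\Gamma$ be a finite group, $S\subseteq\Gamma$, $g\ge 2$, and $\Sigma$ an $|S|$-list of $\Gamma$. If there is an $RSM_\Gamma(S,g;\Sigma)$, then there is an $RSM_\Gamma(S,g+i;\Sigma)$ in each of the following cases: (1) $S=-S$ and $i\ge 2$ is even; (2) $S=\Gamma$, $\Gamma$ has a complete mapping, and $i\ge 1$.
   Context: Let $\Gamma$ be a group (written additively, not necessarily abelian), $S\subseteq\Gamma$ and $\Sigma$ an $|S|$-list (multiset of $|S|$ elements) of $\Gamma$. A row-sum matrix $RSM_\Gamma(S,g;\Sigma)$ is an $|S|\times g$ matrix ($g\ge2$) with entries in $\Gamma$ such that each column is a permutation (arrangement) of $S$ and the multiset of left-to-right row sums $r_1+\cdots+r_g$ equals $\Sigma$. $-S=\{-s: s\in S\}$. A complete mapping of $\Gamma$ is a permutation $\pi$ of $\Gamma$ such that $x\mapsto x+\pi(x)$ is also a permutation of $\Gamma$. *)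

theory Defs
  imports Main "HOL-Library.Multiset"
begin

definition row_sum :: "(nat \<Rightarrow> nat \<Rightarrow> 'a::group_add) \<Rightarrow> nat \<Rightarrow> nat \<Rightarrow> 'a" where
  "row_sum M g r = sum_list (map (\<lambda>j. M r j) [0..<g])"

definition is_RSM :: "'a::group_add set \<Rightarrow> nat \<Rightarrow> 'a multiset \<Rightarrow> (nat \<Rightarrow> nat \<Rightarrow> 'a) \<Rightarrow> bool" where
  "is_RSM S g \<Sigma> M \<longleftrightarrow> g \<ge> 2 \<and>
     (\<forall>j<g. bij_betw (\<lambda>r. M r j) {0..<card S} S) \<and>
     mset (map (row_sum M g) [0..<card S]) = \<Sigma>"

definition complete_mapping :: "('a::group_add \<Rightarrow> 'a) \<Rightarrow> bool" where
  "complete_mapping \<pi> \<longleftrightarrow> bij \<pi> \<and> bij (\<lambda>x. x + \<pi> x)"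

end

theory Submission
  imports Defs
begin

lemma add2:
  fixes S :: "'a::group_add set"
  assumes R: "is_RSM S g \<Sigma> M" and neg: "uminus ` S = S"
  shows "is_RSM S (g+2) \<Sigma> (\<lambda>r j. if j < g then M r j else if j = g then M r 0 else - M r 0)"
    (is "is_RSM S _ _ ?N")
proof -
  have g2: "g \<ge> 2" and col: "\<forall>j<g. bij_betw (\<lambda>r. M r j) {0..<card S} S"
    and ms: "mset (map (row_sum M g) [0..<card S]) = \<Sigma>" using R by (auto simp: is_RSM_def)
  have c0: "bij_betw (\<lambda>r. M r 0) {0..<card S} S" using col g2 by auto
  have u: "bij_betw uminus S S" using neg by (metis bij_betw_imageI inj_on_def neg_equal_iff_equal)
  have c1: "bij_betw (\<lambda>r. - M r 0) {0..<card S} S"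
    using bij_betw_trans[OF c0 u] by (simp add: comp_def)
  have cols: "\<forall>j<g+2. bij_betw (\<lambda>r. ?N r j) {0..<card S} S"
  proof (intro allI impI)
    fix j assume "j < g+2"
    then consider "j < g" | "j = g" | "j = g+1" by linarith
    then show "bij_betw (\<lambda>r. ?N r j) {0..<card S} S"
      by cases (use col c0 c1 in auto)
  qed
  have rs: "row_sum ?N (g+2) r = row_sum M g r" for r
  proof -
    have e: "map (\<lambda>j. ?N r j) [0..<g] = map (\<lambda>j. M r j) [0..<g]" by auto
    have "[0..<g+2] = [0..<g] @ [g, Suc g]" by (simp add: upt_add_eq_append)
    then show ?thesis unfolding row_sum_def
      by (simp only: map_append e sum_list_append) simp
  qed
  have mapeq: "map (row_sum ?N (g+2)) [0..<card S] = map (row_sum M g) [0..<card S]"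
    by (intro map_cong refl rs)
  have mm: "mset (map (row_sum ?N (g+2)) [0..<card S]) = \<Sigma>" unfolding mapeq by (rule ms)
  have g22: "g + 2 \<ge> 2" by simp
  show ?thesis unfolding is_RSM_def by (intro conjI g22 cols mm)
qed

lemma addeven:
  fixes S :: "'a::group_add set"
  assumes "is_RSM S g \<Sigma> M" and "uminus ` S = S"
  shows "\<exists>N. is_RSM S (g + 2*k) \<Sigma> N"
proof (induction k)
  case 0 then show ?case using assms by auto
next
  case (Suc k)
  then obtain N where "is_RSM S (g + 2*k) \<Sigma> N" by auto
  from add2[OF this assms(2)] show ?case by (auto simp: add.assoc)
qed

lemma split1:
  fixes M :: "nat \<Rightarrow> nat \<Rightarrow> 'a::group_add" and \<pi> :: "'a \<Rightarrow> 'a"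
  assumes R: "is_RSM UNIV (Suc (Suc k)) \<Sigma> M" and cm: "complete_mapping \<pi>"
  shows "\<exists>N. is_RSM UNIV (Suc (Suc (Suc k))) \<Sigma> N"
proof -
  define \<phi> :: "'a \<Rightarrow> 'a" where "\<phi> = (\<lambda>x. x + \<pi> x)"
  have bp: "bij \<pi>" and bphi: "bij \<phi>" using cm by (auto simp: complete_mapping_def \<phi>_def)
  define N where "N = (\<lambda>r j. if j < Suc k then M r j else if j = Suc k then inv \<phi> (M r (Suc k))
      else \<pi> (inv \<phi> (M r (Suc k))))"
  let ?n = "card (UNIV::'a set)"
  have col: "\<forall>j<Suc (Suc k). bij_betw (\<lambda>r. M r j) {0..<?n} UNIV"
    and ms: "mset (map (row_sum M (Suc (Suc k))) [0..<?n]) = \<Sigma>" using R by (auto simp: is_RSM_def)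
  have cl: "bij_betw (\<lambda>r. M r (Suc k)) {0..<?n} UNIV" using col by auto
  have bi: "bij (inv \<phi>)" using bphi by (simp add: bij_imp_bij_inv)
  have c1: "bij_betw (\<lambda>r. inv \<phi> (M r (Suc k))) {0..<?n} UNIV"
    using bij_betw_trans[OF cl bi] by (simp add: comp_def)
  have c2: "bij_betw (\<lambda>r. \<pi> (inv \<phi> (M r (Suc k)))) {0..<?n} UNIV"
    using bij_betw_trans[OF c1 bp] by (simp add: comp_def)
  have cols: "\<forall>j<Suc (Suc (Suc k)). bij_betw (\<lambda>r. N r j) {0..<?n} UNIV"
  proof (intro allI impI)
    fix j assume "j < Suc (Suc (Suc k))"
    then consider "j < Suc k" | "j = Suc k" | "j = Suc (Suc k)" by linarith
    then show "bij_betw (\<lambda>r. N r j) {0..<?n} UNIV"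
      by cases (use col c1 c2 in \<open>auto simp: N_def\<close>)
  qed
  have inv: "inv \<phi> c + \<pi> (inv \<phi> c) = c" for c
    using bij_is_surj[OF bphi] surj_f_inv_f[of \<phi> c] by (simp add: \<phi>_def)
  have rs: "row_sum N (Suc (Suc (Suc k))) r = row_sum M (Suc (Suc k)) r" for r
  proof -
    have e: "map (\<lambda>j. N r j) [0..<Suc k] = map (\<lambda>j. M r j) [0..<Suc k]" by (auto simp: N_def)
    have u1: "[0..<Suc (Suc (Suc k))] = [0..<Suc k] @ [Suc k, Suc (Suc k)]" by simp
    have u2: "[0..<Suc (Suc k)] = [0..<Suc k] @ [Suc k]" by simp
    show ?thesis unfolding row_sum_def u1 u2
      by (simp only: map_append e sum_list_append) (simp add: add.assoc N_def inv)
  qed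
  have mapeq: "map (row_sum N (Suc (Suc (Suc k)))) [0..<?n] = map (row_sum M (Suc (Suc k))) [0..<?n]"
    by (intro map_cong refl rs)
  have mm: "mset (map (row_sum N (Suc (Suc (Suc k)))) [0..<?n]) = \<Sigma>" unfolding mapeq by (rule ms)
  have g22: "Suc (Suc (Suc k)) \<ge> 2" by simp
  show ?thesis unfolding is_RSM_def by (intro exI[of _ N] conjI g22 cols mm)
qed

theorem mainTheorem5:
  fixes S :: "'a::{group_add, finite} set"
    and \<Sigma> :: "'a multiset"
    and g i :: nat
  assumes "g \<ge> 2"
    and "size \<Sigma> = card S"
    and "\<exists>M. is_RSM S g \<Sigma> M"
  shows "(uminus ` S = S \<and> i \<ge> 2 \<and> even i \<longrightarrow> (\<exists>M. is_RSM S (g + i) \<Sigma> M))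
       \<and> (S = UNIV \<and> (\<exists>\<pi>::'a \<Rightarrow> 'a. complete_mapping \<pi>) \<and> i \<ge> 1
            \<longrightarrow> (\<exists>M. is_RSM S (g + i) \<Sigma> M))"
proof -
  obtain M where M: "is_RSM S g \<Sigma> M" using assms by auto
  have A: "\<exists>M. is_RSM S (g + i) \<Sigma> M" if "uminus ` S = S" "even i"
  proof -
    have "g + i = g + 2 * (i div 2)" using that(2) by simp
    then show ?thesis using addeven[OF M that(1), of "i div 2"] by simp
  qed
  have B: "\<exists>M. is_RSM S (g + i) \<Sigma> M" if S: "S = UNIV" and p: "complete_mapping \<pi>" for \<pi> :: "'a \<Rightarrow> 'a"
  proof (cases "even i")
    case True
    have "uminus ` (UNIV::'a set) = UNIV" by (rule surjI[of _ uminus]) simp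
    then show ?thesis using A[OF _ True] unfolding S by simp
  next
    case False
    define k where "k = g - 2"
    have gk: "g = Suc (Suc k)" using assms(1) by (simp add: k_def)
    have M': "is_RSM UNIV (Suc (Suc k)) \<Sigma> M" using M unfolding S gk .
    obtain N where N0: "is_RSM UNIV (Suc (Suc (Suc k))) \<Sigma> N" using split1[OF M' p] by blast
    have N: "is_RSM UNIV (Suc g) \<Sigma> N" using N0 unfolding gk .
    have u: "uminus ` (UNIV::'a set) = UNIV" by (rule surjI[of _ uminus]) simp
    have e: "g + i = Suc g + 2*(i div 2)" using False by presburger
    from addeven[OF N u, of "i div 2"] show ?thesis unfolding S e .
  qed
  show ?thesis
  proof (intro conjI impI)
    assume "uminus ` S = S \<and> i \<ge> 2 \<and> even i"
    then show "\<exists>M. is_RSM S (g + i) \<Sigma> M" using A by simp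
  next
    assume h: "S = UNIV \<and> (\<exists>\<pi>::'a \<Rightarrow> 'a. complete_mapping \<pi>) \<and> i \<ge> 1"
    then obtain \<pi> :: "'a \<Rightarrow> 'a" where "complete_mapping \<pi>" by blast
    then show "\<exists>M. is_RSM S (g + i) \<Sigma> M" using B h by simp
  qed
qed

end
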